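(* Let $S$ be a zero-divisor free commutative $\Gamma$-semiring with zero having a left unity and a right unity. Then $S$ is a $\Gamma$-semifield if and only if for every non-constant fuzzy ideal $\mu$ of $S$ one has $\mu(x)=\mu(y)<\mu(0)$ for all $x,y\in S\setminus\{0\}$.
   Context: A $\Gamma$-semiring: $S$ and $\Gamma$ are additive commutative semigroups with a map $S\times\Gamma\times S\to S$, $(a,\alpha,b)\mapsto a\alpha b$, such that $(a+b)\alpha c=a\alpha c+b\alpha c$, $a\alpha(b+c)=a\alpha b+a\alpha c$, $a(\alpha+\beta)b=a\alpha b+a\beta b$, $a\alpha(b\beta c)=(a\alpha b)\beta c$. With zero: $(S,+)$, $(\Gamma,+)$ are monoids, $0_S\alpha x=0_S=x\alpha0_S$, $x0_\Gamma y=0_S$. Commutative: $a\alpha b=b\alpha a$ for all $a,b\in S,\alpha\in\Gamma$. Zero-divisor free: $a\alpha b=0$ implies $a=0$ or $\alpha=0$ or $b=0$. A left unity of $S$ is a finite family $e_i\in S,\delta_i\in\Gamma$ with $\sum_ie_i\delta_ia=a$ for all $a\in S$; a right unity is a finite family $\gamma_j\in\Gamma,f_j\in S$ with $\sum_ja\gamma_jf_j=a$ for all $a\in S$. A $\Gamma$-semifield is a commutative $\Gamma$-semiring such that for every $a\neq0$ in $S$ and $\alpha\neq0$ in $\Gamma$ there exist $b\in S,\beta\in\Gamma$ with $a\alpha b\beta d=d$ for all $d\in S$. A fuzzy ideal of $S$ is a map $\mu:S\to[0,1]$, not identically $0$, with $\mu(x+y)\ge\min[\mu(x),\mu(y)]$,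 $\mu(x\gamma y)\ge\mu(y)$ and $\mu(x\gamma y)\ge\mu(x)$ for all $x,y\in S,\gamma\in\Gamma$; by convention every fuzzy ideal satisfies $\mu(0)=1$. *)

theory Defs
  imports Complex_Main
begin

text \<open>A Gamma-semiring with zero, carried by types 's (for S) and 'g (for Gamma).
  addS, zS: addition and zero of S; addG, zG: addition and zero of Gamma;
  m a \<alpha> b: the ternary product a \<alpha> b.\<close>

definition gamma_semiring_zero ::
  "('s \<Rightarrow> 's \<Rightarrow> 's) \<Rightarrow> 's \<Rightarrow> ('g \<Rightarrow> 'g \<Rightarrow> 'g) \<Rightarrow> 'g \<Rightarrow> ('s \<Rightarrow> 'g \<Rightarrow> 's \<Rightarrow> 's) \<Rightarrow> bool" where
  "gamma_semiring_zero addS zS addG zG m \<longleftrightarrow>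
     (\<forall>a b c. addS (addS a b) c = addS a (addS b c)) \<and>
     (\<forall>a b. addS a b = addS b a) \<and>
     (\<forall>a. addS zS a = a) \<and>
     (\<forall>\<alpha> \<beta> \<gamma>. addG (addG \<alpha> \<beta>) \<gamma> = addG \<alpha> (addG \<beta> \<gamma>)) \<and>
     (\<forall>\<alpha> \<beta>. addG \<alpha> \<beta> = addG \<beta> \<alpha>) \<and>
     (\<forall>\<alpha>. addG zG \<alpha> = \<alpha>) \<and>
     (\<forall>a b c \<alpha>. m (addS a b) \<alpha> c = addS (m a \<alpha> c) (m b \<alpha> c)) \<and>
     (\<forall>a b c \<alpha>. m a \<alpha> (addS b c) = addS (m a \<alpha> b) (m a \<alpha> c)) \<and>
     (\<forall>a b \<alpha> \<beta>. m a (addG \<alpha> \<beta>) b = addS (m a \<alpha> b) (m a \<beta> b)) \<and>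
     (\<forall>a b c \<alpha> \<beta>. m a \<alpha> (m b \<beta> c) = m (m a \<alpha> b) \<beta> c) \<and>
     (\<forall>x \<alpha>. m zS \<alpha> x = zS \<and> m x \<alpha> zS = zS) \<and>
     (\<forall>x y. m x zG y = zS)"

definition gamma_commutative :: "('s \<Rightarrow> 'g \<Rightarrow> 's \<Rightarrow> 's) \<Rightarrow> bool" where
  "gamma_commutative m \<longleftrightarrow> (\<forall>a b \<alpha>. m a \<alpha> b = m b \<alpha> a)"

definition zero_divisor_free :: "'s \<Rightarrow> 'g \<Rightarrow> ('s \<Rightarrow> 'g \<Rightarrow> 's \<Rightarrow> 's) \<Rightarrow> bool" where
  "zero_divisor_free zS zG m \<longleftrightarrow>
     (\<forall>a \<alpha> b. m a \<alpha> b = zS \<longrightarrow> a = zS \<or> \<alpha> = zG \<or> b = zS)"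

definition sumS :: "('s \<Rightarrow> 's \<Rightarrow> 's) \<Rightarrow> 's \<Rightarrow> 's list \<Rightarrow> 's" where
  "sumS addS zS xs = foldr addS xs zS"

definition has_left_unity ::
  "('s \<Rightarrow> 's \<Rightarrow> 's) \<Rightarrow> 's \<Rightarrow> ('s \<Rightarrow> 'g \<Rightarrow> 's \<Rightarrow> 's) \<Rightarrow> bool" where
  "has_left_unity addS zS m \<longleftrightarrow>
     (\<exists>es :: ('s \<times> 'g) list. \<forall>a. sumS addS zS (map (\<lambda>(e, \<delta>). m e \<delta> a) es) = a)"

definition has_right_unity ::
  "('s \<Rightarrow> 's \<Rightarrow> 's) \<Rightarrow> 's \<Rightarrow> ('s \<Rightarrow> 'g \<Rightarrow> 's \<Rightarrow> 's) \<Rightarrow> bool" where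
  "has_right_unity addS zS m \<longleftrightarrow>
     (\<exists>fs :: ('g \<times> 's) list. \<forall>a. sumS addS zS (map (\<lambda>(\<gamma>, f). m a \<gamma> f) fs) = a)"

definition gamma_semifield ::
  "'s \<Rightarrow> 'g \<Rightarrow> ('s \<Rightarrow> 'g \<Rightarrow> 's \<Rightarrow> 's) \<Rightarrow> bool" where
  "gamma_semifield zS zG m \<longleftrightarrow> gamma_commutative m \<and>
     (\<forall>a \<alpha>. a \<noteq> zS \<longrightarrow> \<alpha> \<noteq> zG \<longrightarrow>
        (\<exists>b \<beta>. \<forall>d. m a \<alpha> (m b \<beta> d) = d))"

text \<open>Fuzzy ideal, including the convention mu(0) = 1.\<close>
definition fuzzy_ideal ::
  "('s \<Rightarrow> 's \<Rightarrow> 's) \<Rightarrow> 's \<Rightarrow> ('s \<Rightarrow> 'g \<Rightarrow> 's \<Rightarrow> 's) \<Rightarrow> ('s \<Rightarrow> real) \<Rightarrow> bool" where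
  "fuzzy_ideal addS zS m \<mu> \<longleftrightarrow>
     (\<forall>x. 0 \<le> \<mu> x \<and> \<mu> x \<le> 1) \<and>
     (\<exists>x. \<mu> x \<noteq> 0) \<and>
     (\<forall>x y. \<mu> (addS x y) \<ge> min (\<mu> x) (\<mu> y)) \<and>
     (\<forall>x y \<gamma>. \<mu> (m x \<gamma> y) \<ge> \<mu> y \<and> \<mu> (m x \<gamma> y) \<ge> \<mu> x) \<and>
     \<mu> zS = 1"

end

theory Submission
  imports Defs
begin

lemma sum_nz:
  assumes "\<forall>a. addS zS a = a"
    and "sumS addS zS (map f es) \<noteq> zS"
  shows "\<exists>p\<in>set es. f p \<noteq> zS"
  using assms(2)
proof (induction es)
  case Nil then show ?case by (simp add: sumS_def)
next
  case (Cons p es)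
  then show ?case using assms(1) by (auto simp: sumS_def)
qed

lemma sum_distr:
  assumes "gamma_semiring_zero addS zS addG zG m"
  shows "sumS addS zS (map (\<lambda>p. m (g p) \<beta> d) es) = m (sumS addS zS (map g es)) \<beta> d"
  using assms by (induction es) (auto simp: sumS_def gamma_semiring_zero_def)

lemma swapG:
  assumes "gamma_semiring_zero addS zS addG zG m" "gamma_commutative m"
  shows "m a \<alpha> (m b \<beta> c) = m a \<beta> (m b \<alpha> c)"
proof -
  have A: "\<And>a b c \<alpha> \<beta>. m a \<alpha> (m b \<beta> c) = m (m a \<alpha> b) \<beta> c"
    using assms(1) by (simp add: gamma_semiring_zero_def)
  have C: "\<And>a b \<alpha>. m a \<alpha> b = m b \<alpha> a" using assms(2) by (simp add: gamma_commutative_def)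
  have "m a \<alpha> (m b \<beta> c) = m (m a \<alpha> b) \<beta> c" by (rule A)
  also have "\<dots> = m c \<beta> (m a \<alpha> b)" by (rule C)
  also have "\<dots> = m (m c \<beta> a) \<alpha> b" by (rule A)
  also have "\<dots> = m (m a \<beta> c) \<alpha> b" by (simp add: C)
  also have "\<dots> = m a \<beta> (m c \<alpha> b)" by (simp add: A)
  also have "\<dots> = m a \<beta> (m b \<alpha> c)" by (simp add: C)
  finally show ?thesis .
qed

theorem theorem3p10:
  fixes addS :: "'s \<Rightarrow> 's \<Rightarrow> 's" and zS :: 's
    and addG :: "'g \<Rightarrow> 'g \<Rightarrow> 'g" and zG :: 'g
    and m :: "'s \<Rightarrow> 'g \<Rightarrow> 's \<Rightarrow> 's"
  assumes "gamma_semiring_zero addS zS addG zG m"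
    and "gamma_commutative m"
    and "zero_divisor_free zS zG m"
    and "has_left_unity addS zS m"
    and "has_right_unity addS zS m"
  shows "gamma_semifield zS zG m \<longleftrightarrow>
    (\<forall>\<mu> :: 's \<Rightarrow> real. fuzzy_ideal addS zS m \<mu> \<and> (\<exists>x y. \<mu> x \<noteq> \<mu> y) \<longrightarrow>
       (\<forall>x y. x \<noteq> zS \<longrightarrow> y \<noteq> zS \<longrightarrow> \<mu> x = \<mu> y \<and> \<mu> y < \<mu> zS))"
proof -
  note G = assms(1)[unfolded gamma_semiring_zero_def]
  have A: "\<And>a b c \<alpha> \<beta>. m a \<alpha> (m b \<beta> c) = m (m a \<alpha> b) \<beta> c" using G by meson
  have C: "\<And>a b \<alpha>. m a \<alpha> b = m b \<alpha> a" using assms(2) by (simp add: gamma_commutative_def)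
  have Z0: "\<And>a. addS zS a = a" using G by meson
  have mz: "\<And>x \<alpha>. m zS \<alpha> x = zS" "\<And>x \<alpha>. m x \<alpha> zS = zS" "\<And>x y. m x zG y = zS" using G by meson+
  have dr: "\<And>a b c \<alpha>. m a \<alpha> (addS b c) = addS (m a \<alpha> b) (m a \<alpha> c)" using G by meson
  have zdf: "\<And>a \<alpha> b. m a \<alpha> b = zS \<Longrightarrow> a = zS \<or> \<alpha> = zG \<or> b = zS"
    using assms(3) by (simp add: zero_divisor_free_def)
  obtain es where es: "\<And>a. sumS addS zS (map (\<lambda>(e, \<delta>). m e \<delta> a) es) = a"
    using assms(4) by (auto simp: has_left_unity_def)
  have nzterm: "\<exists>e \<delta>. e \<noteq> zS \<and> \<delta> \<noteq> zG \<and> (e, \<delta>) \<in> set es" if "c \<noteq> zS" for c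
  proof -
    have "sumS addS zS (map (\<lambda>(e, \<delta>). m e \<delta> c) es) \<noteq> zS" using es that by simp
    then obtain p where "p \<in> set es" "(\<lambda>(e, \<delta>). m e \<delta> c) p \<noteq> zS"
      using sum_nz[OF _ ] Z0 by metis
    then show ?thesis using mz by (metis (mono_tags, lifting) case_prod_conv surj_pair)
  qed
  show ?thesis
  proof
    assume sf: "gamma_semifield zS zG m"
    show "\<forall>\<mu> :: 's \<Rightarrow> real. fuzzy_ideal addS zS m \<mu> \<and> (\<exists>x y. \<mu> x \<noteq> \<mu> y) \<longrightarrow>
       (\<forall>x y. x \<noteq> zS \<longrightarrow> y \<noteq> zS \<longrightarrow> \<mu> x = \<mu> y \<and> \<mu> y < \<mu> zS)"
    proof (intro allI impI)
      fix \<mu> :: "'s \<Rightarrow> real" and x y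
      assume H: "fuzzy_ideal addS zS m \<mu> \<and> (\<exists>x y. \<mu> x \<noteq> \<mu> y)" and x: "x \<noteq> zS" and y: "y \<noteq> zS"
      have rng: "\<And>x. 0 \<le> \<mu> x \<and> \<mu> x \<le> 1" and mu0: "\<mu> zS = 1"
        and mul: "\<And>x y \<gamma>. \<mu> (m x \<gamma> y) \<ge> \<mu> y \<and> \<mu> (m x \<gamma> y) \<ge> \<mu> x"
        using H by (auto simp: fuzzy_ideal_def)
      obtain e \<delta> where "\<delta> \<noteq> zG" using nzterm[OF x] by blast
      have low: "\<mu> d \<ge> \<mu> z" if zz: "z \<noteq> zS" for z d
      proof -
        obtain b \<beta> where "\<forall>d. m z \<delta> (m b \<beta> d) = d"
          using sf \<open>\<delta> \<noteq> zG\<close> zz unfolding gamma_semifield_def by blast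
        then have "\<mu> d = \<mu> (m z \<delta> (m b \<beta> d))" by simp
        then show ?thesis using mul[where x=z and y="m b \<beta> d" and \<gamma>=\<delta>] by linarith
      qed
      have eq: "\<mu> x = \<mu> y" using low[OF x, of y] low[OF y, of x] by simp
      moreover have "\<mu> y < \<mu> zS"
      proof (rule ccontr)
        assume "\<not> \<mu> y < \<mu> zS"
        then have "\<mu> y = 1" using rng[of y] mu0 by simp
        then have "\<mu> d = 1" for d using low[OF y, of d] rng[of d] by linarith
        then show False using H by auto
      qed
      ultimately show "\<mu> x = \<mu> y \<and> \<mu> y < \<mu> zS" by simp
    qed
  next
    assume FZ: "\<forall>\<mu> :: 's \<Rightarrow> real. fuzzy_ideal addS zS m \<mu> \<and> (\<exists>x y. \<mu> x \<noteq> \<mu> y) \<longrightarrow>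
       (\<forall>x y. x \<noteq> zS \<longrightarrow> y \<noteq> zS \<longrightarrow> \<mu> x = \<mu> y \<and> \<mu> y < \<mu> zS)"
    have surj: "\<exists>x. m a \<alpha> x = d" if a: "a \<noteq> zS" and al: "\<alpha> \<noteq> zG" for a \<alpha> d
    proof -
      define \<mu> :: "'s \<Rightarrow> real" where "\<mu> y = (if \<exists>x. y = m a \<alpha> x then 1 else 0)" for y
      have f1: "\<exists>x. \<mu> x \<noteq> 0" by (rule exI[of _ "m a \<alpha> a"]) (auto simp: \<mu>_def)
      have f2: "\<mu> zS = 1" using mz(2)[of a \<alpha>] unfolding \<mu>_def by metis
      have f3: "min (\<mu> x) (\<mu> y) \<le> \<mu> (addS x y)" for x y
          using dr[symmetric] by (auto simp: \<mu>_def)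
      have f4: "\<mu> y \<le> \<mu> (m x \<gamma> y)" for x y \<gamma>
          proof (cases "\<exists>z. y = m a \<alpha> z")
            case True
            then obtain z where "y = m a \<alpha> z" by blast
            then have "m x \<gamma> y = m a \<alpha> (m z \<gamma> x)" using A[of a \<alpha> z \<gamma> x] C[of x \<gamma> y] by simp
            then show ?thesis by (auto simp: \<mu>_def)
          qed (auto simp: \<mu>_def)
      have f5: "\<mu> x \<le> \<mu> (m x \<gamma> y)" for x y \<gamma>
          proof (cases "\<exists>z. x = m a \<alpha> z")
            case True
            then obtain z where "x = m a \<alpha> z" by blast
            then have "m x \<gamma> y = m a \<alpha> (m z \<gamma> y)" using A[of a \<alpha> z \<gamma> y] by simp
            then show ?thesis by (auto simp: \<mu>_def)
          qed (auto simp: \<mu>_def)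
      have f6: "0 \<le> \<mu> x \<and> \<mu> x \<le> 1" for x by (auto simp: \<mu>_def)
      have fi: "fuzzy_ideal addS zS m \<mu>"
        unfolding fuzzy_ideal_def using f1 f2 f3 f4 f5 f6 by blast
      have "m a \<alpha> a \<noteq> zS" using zdf a al by blast
      moreover have "\<mu> (m a \<alpha> a) = \<mu> zS" using f2 unfolding \<mu>_def by auto
      ultimately have "\<not> (\<exists>x y. \<mu> x \<noteq> \<mu> y)"
      proof (intro notI)
        assume nz: "m a \<alpha> a \<noteq> zS" and eq: "\<mu> (m a \<alpha> a) = \<mu> zS" and ex: "\<exists>x y. \<mu> x \<noteq> \<mu> y"
        have "\<mu> (m a \<alpha> a) < \<mu> zS" using spec[OF FZ, of \<mu>] fi ex nz by blast
        then show False using eq by simp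
      qed
      then have "\<mu> d = \<mu> zS" by blast
      then show ?thesis using f2 unfolding \<mu>_def by (metis zero_neq_one)
    qed
    show "gamma_semifield zS zG m"
      unfolding gamma_semifield_def
    proof (intro conjI allI impI)
      show "gamma_commutative m" by (rule assms(2))
      fix a \<alpha>
      assume a: "a \<noteq> zS" and al: "\<alpha> \<noteq> zG"
      obtain ek \<delta>k where ek: "ek \<noteq> zS" "\<delta>k \<noteq> zG" "(ek, \<delta>k) \<in> set es" using nzterm[OF a] by blast
      define y where "y e = (SOME x. m ek \<delta>k x = e)" for e
      have y: "m ek \<delta>k (y e) = e" for e unfolding y_def using someI_ex[OF surj[OF ek(1,2), of e]] by simp
      define E where "E = sumS addS zS (map (\<lambda>(e, \<delta>). m ek \<delta> (y e)) es)"
      have unit: "m E \<delta>k d = d" for d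
      proof -
        have "\<And>e \<delta>. m e \<delta> d = m (m ek \<delta> (y e)) \<delta>k d"
        proof -
          fix e \<delta>
          have "m e \<delta> d = m (m ek \<delta>k (y e)) \<delta> d" by (simp add: y)
          also have "\<dots> = m ek \<delta>k (m (y e) \<delta> d)" by (simp add: A)
          also have "\<dots> = m ek \<delta> (m (y e) \<delta>k d)" by (rule swapG[OF assms(1,2)])
          also have "\<dots> = m (m ek \<delta> (y e)) \<delta>k d" by (simp add: A)
          finally show "m e \<delta> d = m (m ek \<delta> (y e)) \<delta>k d" .
        qed
        then have me: "map (\<lambda>(e, \<delta>). m e \<delta> d) es = map (\<lambda>p. m ((\<lambda>(e, \<delta>). m ek \<delta> (y e)) p) \<delta>k d) es"
          by (auto split: prod.splits)
        then have "d = sumS addS zS (map (\<lambda>p. m ((\<lambda>(e, \<delta>). m ek \<delta> (y e)) p) \<delta>k d) es)"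
          unfolding me[symmetric] using es[of d] by simp
        also have "\<dots> = m E \<delta>k d" unfolding E_def by (rule sum_distr[OF assms(1)])
        finally show ?thesis by simp
      qed
      obtain b where b: "m a \<alpha> b = E" using surj[OF a al] by blast
      show "\<exists>b \<beta>. \<forall>d. m a \<alpha> (m b \<beta> d) = d"
        by (rule exI[of _ b], rule exI[of _ \<delta>k]) (simp add: A b unit)
    qed
  qed
qed

end
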